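(* Consider robust dynamic pricing with horizon $T$, valuation $v^\star\in[0,1)$, and feedback corrupted in at most $C$ rounds, and run the meta-algorithm described in the context with an arbitrary commitment subroutine. Then the number of commit failures on incorrect leaves satisfies \[ N_{\textsc{F}} \le \lceil\log_2 T\rceil + C + N_{\textsc{T}}, \] and the regret satisfies \[ R_T \le \sum_{\ell\in\mathcal L} R(\ell) + 3\lceil\log_2 T\rceil + 6C + 3N_{\textsc{T}}. \]
   Context: Robust dynamic pricing: there are $T$ rounds and an unknown valuation $v^\star\in[0,1)$. At each round $t$ the seller posts a price $p_t\in[0,1]$ (chosen, possibly at random, based on past observations). The true sale indicator is $y_t=\mathbbm 1\{p_t\le v^\star\}$; the seller observes $\sigma_t\in\{0,1\}$, and round $t$ is corrupted if $\sigma_t\ne y_t$. At most $C$ rounds are corrupted: $|\{t\in[T]:\sigma_t\neq y_t\}|\le C$. The adversary decides whether to corrupt round $t$ based on the history and on the seller's distribution over $p_t$, but not on the realized $p_t$ (how it corrupts may depend on the realized price). Revenue is $r_t=p_t\,\mathbbm 1\{p_t\le v^\star\}$ and regret is $R_T=T v^\star-\sum_{t=1}^T r_t$. Meta-algorithm: let $D=\lceil\log_2 T\rceil$. Consider the complete binary tree of intervals of depth $D$ whose root is $[0,1)$ and in which each non-leaf node $[L,R)$ has children $[L,M)$ and $[M,R)$ with $M=(L+R)/2$; the nodes at depth $D$ are the leaves, forming the set $\mathcal L$ (each of length at most $1/T$), and $\ell^\star$ denotes the unique leaf containing $v^\star$. The algorithm keeps a current node $I$, initially the root, and repeats until the horizon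 ends: if $I=[L,R)$ is not a leaf, it performs a safety check — post $L$ and observe $\sigma_L$, then post $R$ and observe $\sigma_R$; the check fails if $\sigma_L=0$ or $\sigma_R=1$ (by convention, the query at $L=0$ and the query at $R=1$ always count as passing). If the check fails, $I$ is replaced by its parent; otherwise the algorithm posts $M=(L+R)/2$, observes $\sigma_M$, and replaces $I$ by $[M,R)$ if $\sigma_M=1$ and by $[L,M)$ if $\sigma_M=0$. If $I$ is a leaf, the algorithm calls a commitment subroutine on $I$, which posts prices on consecutive rounds and either continues until the horizon ends or returns FAIL, in which case $I$ is replaced by its parent. For a leaf $\ell$, $Q(\ell)$ is the set of rounds during which the commitment subroutine runs on $\ell$, and $R(\ell)=\sum_{t\in Q(\ell)}(v^\star-p_t\mathbbm 1\{p_t\le v^\star\})$. $N_{\textsc{T}}$ is the number of times the commitment subroutine returns FAIL on $\ell^\star$, and $N_{\textsc{F}}$ is the number of times it returns FAIL on a leaf different from $\ell^\star$. *)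

theory Defs
  imports Complex_Main
begin

text \<open>Nodes of the complete binary tree of dyadic intervals: (d, k) is the
interval [k/2^d, (k+1)/2^d) at depth d. Rounds are indexed 0, ..., T-1.\<close>

type_synonym node = "nat \<times> nat"

definition lft :: "node \<Rightarrow> real" where
  "lft I = real (snd I) / 2 ^ fst I"

definition rgt :: "node \<Rightarrow> real" where
  "rgt I = (real (snd I) + 1) / 2 ^ fst I"

definition midp :: "node \<Rightarrow> real" where
  "midp I = (lft I + rgt I) / 2"

definition parent :: "node \<Rightarrow> node" where
  "parent I = (fst I - 1, snd I div 2)"

definition lchild :: "node \<Rightarrow> node" where
  "lchild I = (Suc (fst I), 2 * snd I)"

definition rchild :: "node \<Rightarrow> node" where
  "rchild I = (Suc (fst I), 2 * snd I + 1)"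

text \<open>Algorithm state at the start of a round:
  ChkL I      : about to post L of the safety check at I;
  ChkR I b    : about to post R of the safety check at I, b = whether the L query passed;
  Mid I       : check passed, about to post the midpoint M of I;
  Com l       : commitment subroutine running on leaf l.\<close>

datatype st = ChkL node | ChkR node bool | Mid node | Com node

definition enter :: "nat \<Rightarrow> node \<Rightarrow> st" where
  "enter D J = (if fst J = D then Com J else ChkL J)"

text \<open>The commitment subroutine is arbitrary: in round t it either posts price p t,
  or returns FAIL (fl t) before posting. A FAIL consumes no round; the algorithm then
  immediately starts the safety check at the parent in the same round. (The root has
  no parent, so a FAIL on the root -- possible only when D = 0 -- is not possible.)\<close>

definition fails :: "(nat \<Rightarrow> bool) \<Rightarrow> st \<Rightarrow> nat \<Rightarrow> bool" where
  "fails fl s t = (case s of Com l \<Rightarrow> fl t \<and> 0 < fst l | _ \<Rightarrow> False)"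

definition posted :: "(nat \<Rightarrow> real) \<Rightarrow> (nat \<Rightarrow> bool) \<Rightarrow> st \<Rightarrow> nat \<Rightarrow> real" where
  "posted p fl s t = (case s of
      ChkL I \<Rightarrow> lft I
    | ChkR I b \<Rightarrow> rgt I
    | Mid I \<Rightarrow> midp I
    | Com l \<Rightarrow> (if fails fl s t then lft (parent l) else p t))"

definition nxt :: "nat \<Rightarrow> (nat \<Rightarrow> bool) \<Rightarrow> (nat \<Rightarrow> bool) \<Rightarrow> st \<Rightarrow> nat \<Rightarrow> st" where
  "nxt D fl obs s t = (case s of
      ChkL I \<Rightarrow> ChkR I (lft I = 0 \<or> obs t)
    | ChkR I b \<Rightarrow> (if b \<and> (rgt I = 1 \<or> \<not> obs t) then Mid I else enter D (parent I))
    | Mid I \<Rightarrow> (if obs t then enter D (rchild I) else enter D (lchild I))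
    | Com l \<Rightarrow> (if fails fl s t then ChkR (parent l) (lft (parent l) = 0 \<or> obs t) else Com l))"

primrec state :: "nat \<Rightarrow> (nat \<Rightarrow> bool) \<Rightarrow> (nat \<Rightarrow> bool) \<Rightarrow> nat \<Rightarrow> st" where
  "state D fl obs 0 = enter D (0, 0)"
| "state D fl obs (Suc t) = nxt D fl obs (state D fl obs t) t"

definition price :: "nat \<Rightarrow> (nat \<Rightarrow> real) \<Rightarrow> (nat \<Rightarrow> bool) \<Rightarrow> (nat \<Rightarrow> bool) \<Rightarrow> nat \<Rightarrow> real" where
  "price D p fl obs t = posted p fl (state D fl obs t) t"

definition revenue :: "real \<Rightarrow> real \<Rightarrow> real" where
  "revenue v q = (if q \<le> v then q else 0)"

definition leaves :: "nat \<Rightarrow> node set" where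
  "leaves D = {(D, k) | k. k < 2 ^ D}"

definition true_leaf :: "nat \<Rightarrow> real \<Rightarrow> node" where
  "true_leaf D v = (D, nat \<lfloor>v * 2 ^ D\<rfloor>)"

definition commit_rounds :: "nat \<Rightarrow> (nat \<Rightarrow> bool) \<Rightarrow> (nat \<Rightarrow> bool) \<Rightarrow> nat \<Rightarrow> node \<Rightarrow> nat set" where
  "commit_rounds D fl obs T l =
     {t. t < T \<and> state D fl obs t = Com l \<and> \<not> fails fl (state D fl obs t) t}"

definition leaf_regret ::
  "nat \<Rightarrow> (nat \<Rightarrow> real) \<Rightarrow> (nat \<Rightarrow> bool) \<Rightarrow> (nat \<Rightarrow> bool) \<Rightarrow> real \<Rightarrow> nat \<Rightarrow> node \<Rightarrow> real" where
  "leaf_regret D p fl obs v T l =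
     (\<Sum>t\<in>commit_rounds D fl obs T l. v - revenue v (price D p fl obs t))"

definition n_fail_true :: "nat \<Rightarrow> (nat \<Rightarrow> bool) \<Rightarrow> (nat \<Rightarrow> bool) \<Rightarrow> real \<Rightarrow> nat \<Rightarrow> nat" where
  "n_fail_true D fl obs v T =
     card {t. t < T \<and> fails fl (state D fl obs t) t \<and> state D fl obs t = Com (true_leaf D v)}"

definition n_fail_false :: "nat \<Rightarrow> (nat \<Rightarrow> bool) \<Rightarrow> (nat \<Rightarrow> bool) \<Rightarrow> real \<Rightarrow> nat \<Rightarrow> nat" where
  "n_fail_false D fl obs v T =
     card {t. t < T \<and> fails fl (state D fl obs t) t \<and> state D fl obs t \<noteq> Com (true_leaf D v)}"

definition regret :: "nat \<Rightarrow> (nat \<Rightarrow> real) \<Rightarrow> (nat \<Rightarrow> bool) \<Rightarrow> (nat \<Rightarrow> bool) \<Rightarrow> real \<Rightarrow> nat \<Rightarrow> real" where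
  "regret D p fl obs v T = real T * v - (\<Sum>t<T. revenue v (price D p fl obs t))"

definition corruptions :: "nat \<Rightarrow> (nat \<Rightarrow> real) \<Rightarrow> (nat \<Rightarrow> bool) \<Rightarrow> (nat \<Rightarrow> bool) \<Rightarrow> real \<Rightarrow> nat \<Rightarrow> nat" where
  "corruptions D p fl obs v T = card {t. t < T \<and> obs t \<noteq> (price D p fl obs t \<le> v)}"

end

theory Submission
  imports Defs
begin

definition cont :: "real \<Rightarrow> node \<Rightarrow> bool" where
  "cont v I = (lft I \<le> v \<and> v < rgt I)"

definition vn :: "node \<Rightarrow> bool" where "vn I = (snd I < 2 ^ fst I)"

fun dst :: "nat \<Rightarrow> real \<Rightarrow> nat \<Rightarrow> nat \<Rightarrow> nat" where
  "dst D v 0 k = D"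
| "dst D v (Suc d) k = (if cont v (Suc d, k) then D - Suc d else Suc (dst D v d (k div 2)))"

definition tdist :: "nat \<Rightarrow> real \<Rightarrow> node \<Rightarrow> nat" where
  "tdist D v I = dst D v (fst I) (snd I)"

lemma lft_nonneg: "0 \<le> lft I" by (simp add: lft_def)
lemma rgt_le1: "vn I \<Longrightarrow> rgt I \<le> 1"
proof -
  assume "vn I"
  then have "real (snd I) + 1 \<le> 2 ^ fst I"
    unfolding vn_def by (metis Suc_leI of_nat_Suc of_nat_le_iff of_nat_numeral of_nat_power add.commute)
  then show ?thesis by (simp add: rgt_def)
qed
lemma lft_lt_mid: "lft I < midp I" and mid_lt_rgt: "midp I < rgt I"
  by (auto simp: lft_def rgt_def midp_def field_simps)
lemma midp_nonneg: "0 \<le> midp I" using lft_nonneg lft_lt_mid by (metis less_eq_real_def order_trans)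
lemma rgt_nonneg: "0 \<le> rgt I" using midp_nonneg mid_lt_rgt by (metis less_eq_real_def order_trans)

lemma lchild_lr: "lft (lchild I) = lft I" "rgt (lchild I) = midp I"
  and rchild_lr: "lft (rchild I) = midp I" "rgt (rchild I) = rgt I"
  by (auto simp: lft_def rgt_def midp_def lchild_def rchild_def field_simps)

lemma parent_child: "parent (lchild I) = I" "parent (rchild I) = I"
  by (auto simp: parent_def lchild_def rchild_def)

lemma vn_child: "vn I \<Longrightarrow> vn (lchild I)" "vn I \<Longrightarrow> vn (rchild I)"
  by (auto simp: vn_def lchild_def rchild_def)

lemma vn_parent: "vn I \<Longrightarrow> vn (parent I)"
  apply (cases "fst I")
  by (auto simp: vn_def parent_def)

lemma root_cont: "0 \<le> v \<Longrightarrow> v < 1 \<Longrightarrow> cont v (0,0)"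
  by (simp add: cont_def lft_def rgt_def)

lemma vn_depth0: "vn I \<Longrightarrow> fst I = 0 \<Longrightarrow> I = (0,0)"
  by (cases I) (auto simp: vn_def)

lemma cont_parent:
  assumes "fst I > 0" "cont v I" shows "cont v (parent I)"
proof -
  obtain d k where I: "I = (Suc d, k)" using assms(1) by (cases I) (auto simp: gr0_conv_Suc)
  have a: "real (k div 2) * 2 \<le> real k"
  proof -
    have "(k div 2) * 2 \<le> k" by simp
    then have "real ((k div 2) * 2) \<le> real k" by (simp only: of_nat_le_iff)
    then show ?thesis by simp
  qed
  have b: "real k + 1 \<le> (real (k div 2) + 1) * 2"
  proof -
    have m: "k mod 2 < 2" by simp
    have "k + 1 \<le> k div 2 * 2 + 2" using m div_mult_mod_eq[of k 2] by linarith
    then have "real (k + 1) \<le> real (k div 2 * 2 + 2)" by (simp only: of_nat_le_iff)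
    then show ?thesis by (simp add: algebra_simps)
  qed
  have p: "(0::real) < 2 ^ d" by simp
  have "(real (k div 2) * 2) / (2 * 2^d) \<le> real k / (2 * 2^d)"
    by (rule divide_right_mono[OF a]) simp
  then have L: "lft (parent I) \<le> lft I"
    by (simp add: I lft_def parent_def)
  have R1: "(real k + 1) / (2 * 2^d) \<le> ((real (k div 2) + 1) * 2) / (2 * 2^d)"
    by (rule divide_right_mono[OF b]) simp
  have R2: "(z * 2) / (2 * 2^d) = z / 2^d" for z :: real
    by simp
  have R: "rgt I \<le> rgt (parent I)"
    using R1 unfolding R2 by (simp add: I rgt_def parent_def)
  show ?thesis using L R assms(2) by (auto simp: cont_def)
qed

lemma dist_cont: "vn I \<Longrightarrow> cont v I \<Longrightarrow> tdist D v I = D - fst I"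
  by (cases I; cases "fst I") (auto simp: tdist_def)

lemma dist_ncont:
  assumes "\<not> cont v I" "0 \<le> v" "v < 1" "vn I"
  shows "fst I > 0 \<and> tdist D v I = Suc (tdist D v (parent I))"
proof -
  have "fst I \<noteq> 0" using assms vn_depth0 root_cont by metis
  then obtain d k where I: "I = (Suc d, k)" by (cases I) (auto simp: gr0_conv_Suc not0_implies_Suc)
  show ?thesis using assms(1) by (simp add: I tdist_def parent_def)
qed

lemma dist_parent_le:
  assumes "vn I" "fst I \<le> D" "0 \<le> v" "v < 1"
  shows "tdist D v (parent I) \<le> tdist D v I + 1"
proof (cases "fst I = 0")
  case True
  then have "I = (0,0)" using assms vn_depth0 by blast
  then show ?thesis by (simp add: parent_def)
next
  case False
  show ?thesis
  proof (cases "cont v I")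
    case True
    then have "cont v (parent I)" using cont_parent False by blast
    then have "tdist D v (parent I) = D - fst (parent I)" using dist_cont vn_parent assms by blast
    moreover have "tdist D v I = D - fst I" using dist_cont True assms by blast
    ultimately show ?thesis using False assms(2) by (simp add: parent_def)
  next
    case False
    then show ?thesis using dist_ncont assms by fastforce
  qed
qed

lemma dist_child_le:
  assumes "vn J" "fst J = Suc (fst I)" "parent J = I" "fst J \<le> D" "cont v J \<Longrightarrow> cont v I"
    "vn I" "0 \<le> v" "v < 1"
  shows "tdist D v J \<le> tdist D v I + 1"
proof (cases "cont v J")
  case True
  then show ?thesis using dist_cont[OF assms(1) True, of D] dist_cont[OF assms(6) assms(5)[OF True], of D] assms(2)
    by simp
next
  case False
  then show ?thesis using dist_ncont assms by fastforce
qed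

lemma dist_child_eq:
  assumes "vn J" "fst J = Suc (fst I)" "fst J \<le> D" "cont v J" "cont v I" "vn I"
  shows "tdist D v J + 1 = tdist D v I"
  using dist_cont[OF assms(1,4)] dist_cont[OF assms(6,5)] assms(2,3) by simp

lemma dist_internal:
  assumes "vn I" "fst I < D" "0 \<le> v" "v < 1"
  shows "tdist D v I \<ge> 1"
  using dist_cont[of I v D] dist_ncont[of v I D] assms by (cases "cont v I") auto

lemma leaf_cont:
  assumes "vn l" "fst l = D" "0 \<le> v"
  shows "cont v l \<longleftrightarrow> l = true_leaf D v"
proof -
  obtain k where l: "l = (D, k)" using assms(2) by (cases l) auto
  have p: "(0::real) < 2 ^ D" by simp
  have "cont v l \<longleftrightarrow> real k \<le> v * 2 ^ D \<and> v * 2 ^ D < real k + 1"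
    using p by (simp add: l cont_def lft_def rgt_def field_simps)
  also have "\<dots> \<longleftrightarrow> \<lfloor>v * 2 ^ D\<rfloor> = int k"
    by (simp add: floor_eq_iff)
  also have "\<dots> \<longleftrightarrow> nat \<lfloor>v * 2 ^ D\<rfloor> = k"
    using assms(3) by auto
  finally show ?thesis by (auto simp: l true_leaf_def)
qed

definition valid :: "nat \<Rightarrow> st \<Rightarrow> bool" where
  "valid D s = (case s of ChkL I \<Rightarrow> vn I \<and> fst I < D | ChkR I b \<Rightarrow> vn I \<and> fst I < D
     | Mid I \<Rightarrow> vn I \<and> fst I < D | Com l \<Rightarrow> vn l \<and> fst l = D)"

definition psi :: "nat \<Rightarrow> real \<Rightarrow> st \<Rightarrow> int" where
  "psi D v s = (case s of ChkL I \<Rightarrow> int (tdist D v I)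
     | ChkR I b \<Rightarrow> int (tdist D v I) + (if b = (lft I \<le> v) then 0 else 1)
     | Mid I \<Rightarrow> int (tdist D v I) + (if cont v I then 0 else 1)
     | Com l \<Rightarrow> int (tdist D v l))"

definition theta :: "nat \<Rightarrow> real \<Rightarrow> st \<Rightarrow> int" where
  "theta D v s = (case s of ChkL I \<Rightarrow> 3 * int (tdist D v I)
     | ChkR I b \<Rightarrow> 3 * int (tdist D v I) + (if b = (lft I \<le> v) then -1 else 5)
     | Mid I \<Rightarrow> 3 * int (tdist D v I) + (if cont v I then -2 else 4)
     | Com l \<Rightarrow> 3 * int (tdist D v l))"

lemma valid_enter: "vn J \<Longrightarrow> fst J \<le> D \<Longrightarrow> valid D (enter D J)"
  by (auto simp: enter_def valid_def)

lemma psi_enter: "psi D v (enter D J) = int (tdist D v J)"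
  and theta_enter: "theta D v (enter D J) = 3 * int (tdist D v J)"
  by (auto simp: enter_def psi_def theta_def)

lemma valid_init: "valid D (enter D (0,0))"
  by (rule valid_enter) (auto simp: vn_def)

lemma fst_child: "fst (lchild I) = Suc (fst I)" "fst (rchild I) = Suc (fst I)"
  by (auto simp: lchild_def rchild_def)

lemma fst_parent: "fst (parent I) = fst I - 1" by (simp add: parent_def)

lemma valid_nxt: assumes "valid D s" shows "valid D (nxt D fl obs s t)"
proof (cases s)
  case (ChkL I) then show ?thesis using assms by (auto simp: valid_def nxt_def)
next
  case (ChkR I b)
  then have "vn I" "fst I < D" using assms by (auto simp: valid_def)
  then have "valid D (enter D (parent I))" by (intro valid_enter vn_parent) (auto simp: fst_parent)
  then show ?thesis using ChkR assms by (auto simp: valid_def nxt_def)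
next
  case (Mid I)
  then have "vn I" "fst I < D" using assms by (auto simp: valid_def)
  then have "valid D (enter D (lchild I))" "valid D (enter D (rchild I))"
    by (auto intro!: valid_enter vn_child simp: fst_child)
  then show ?thesis using Mid by (auto simp: nxt_def)
next
  case (Com l)
  then have "vn l" "fst l = D" using assms by (auto simp: valid_def)
  then show ?thesis using Com assms by (auto simp: valid_def nxt_def fails_def fst_parent vn_parent)
qed

lemma theta_nonneg:
  assumes "valid D s" "0 \<le> v" "v < 1" shows "theta D v s \<ge> 0"
  using assms dist_internal[of _ D v]
  by (cases s) (fastforce simp: valid_def theta_def)+

lemma psi_nonneg: "psi D v s \<ge> 0"
  by (cases s) (auto simp: psi_def)

lemma step_ChkL:
  fixes obs fl :: "nat \<Rightarrow> bool" and t :: nat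
  assumes "vn I" "fst I < D" "0 \<le> v" "v < 1"
  defines "cr \<equiv> (obs t \<noteq> (lft I \<le> v))"
  shows "psi D v (nxt D fl obs (ChkL I) t) \<le> psi D v (ChkL I) + (if cr then 1 else 0)"
    and "theta D v (nxt D fl obs (ChkL I) t) + 1 \<le> theta D v (ChkL I) + (if cr then 6 else 0)"
  using assms(3) by (auto simp: nxt_def psi_def theta_def cr_def)

lemma step_ChkR:
  fixes obs fl :: "nat \<Rightarrow> bool" and t :: nat
  assumes "vn I" "fst I < D" "0 \<le> v" "v < 1"
  defines "cr \<equiv> (obs t \<noteq> (rgt I \<le> v))"
  shows "psi D v (nxt D fl obs (ChkR I b) t) \<le> psi D v (ChkR I b) + (if cr then 1 else 0)"
    and "theta D v (nxt D fl obs (ChkR I b) t) + 1 \<le> theta D v (ChkR I b) + (if cr then 6 else 0)"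
proof -
  define d where "d = int (tdist D v I)"
  define dp where "dp = int (tdist D v (parent I))"
  have h1: "dp \<le> d + 1" using dist_parent_le[of I D v] assms by (simp add: d_def dp_def)
  have h2: "\<not> cont v I \<Longrightarrow> dp + 1 = d" using dist_ncont[of v I D] assms by (simp add: d_def dp_def)
  have h3: "rgt I \<le> 1" using rgt_le1 assms by blast
  have pe: "psi D v (enter D (parent I)) = dp" "theta D v (enter D (parent I)) = 3 * dp"
    by (simp_all add: psi_enter theta_enter dp_def)
  have pm: "psi D v (Mid I) \<le> d + 1" "theta D v (Mid I) \<le> 3 * d + 4"
    by (auto simp: psi_def theta_def d_def)
  have pm2: "cont v I \<Longrightarrow> psi D v (Mid I) = d \<and> theta D v (Mid I) = 3 * d - 2"
    by (auto simp: psi_def theta_def d_def)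
  have ps: "psi D v (ChkR I b) = d + (if b = (lft I \<le> v) then 0 else 1)"
     "theta D v (ChkR I b) = 3 * d + (if b = (lft I \<le> v) then -1 else 5)"
    by (auto simp: psi_def theta_def d_def)
  have nx: "nxt D fl obs (ChkR I b) t = (if b \<and> (rgt I = 1 \<or> \<not> obs t) then Mid I else enter D (parent I))"
    by (simp add: nxt_def)
  have "psi D v (nxt D fl obs (ChkR I b) t) \<le> psi D v (ChkR I b) + (if cr then 1 else 0)
    \<and> theta D v (nxt D fl obs (ChkR I b) t) + 1 \<le> theta D v (ChkR I b) + (if cr then 6 else 0)"
  proof (cases "b = (lft I \<le> v)")
    case on: True
    show ?thesis
    proof (cases "cont v I")
      case True
      then have "b" "v < rgt I" using on by (auto simp: cont_def)
      then show ?thesis unfolding nx ps using pm pm2[OF True] pe h1 on by (auto simp: cr_def)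
    next
      case False
      then have "v < lft I \<or> rgt I \<le> v" by (auto simp: cont_def)
      then show ?thesis unfolding nx ps using pm pe h1 h2[OF False] on h3 assms(4) by (auto simp: cr_def)
    qed
  next
    case False
    then show ?thesis unfolding nx ps using pm pe h1 by auto
  qed
  then show "psi D v (nxt D fl obs (ChkR I b) t) \<le> psi D v (ChkR I b) + (if cr then 1 else 0)"
    and "theta D v (nxt D fl obs (ChkR I b) t) + 1 \<le> theta D v (ChkR I b) + (if cr then 6 else 0)"
    by auto
qed

lemma step_Mid:
  fixes obs fl :: "nat \<Rightarrow> bool" and t :: nat
  assumes "vn I" "fst I < D" "0 \<le> v" "v < 1"
  defines "cr \<equiv> (obs t \<noteq> (midp I \<le> v))"
  shows "psi D v (nxt D fl obs (Mid I) t) \<le> psi D v (Mid I) + (if cr then 1 else 0)"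
    and "theta D v (nxt D fl obs (Mid I) t) + 1 \<le> theta D v (Mid I) + (if cr then 6 else 0)"
proof -
  define d where "d = int (tdist D v I)"
  define dl where "dl = int (tdist D v (lchild I))"
  define dr where "dr = int (tdist D v (rchild I))"
  have cl: "cont v (lchild I) \<longleftrightarrow> cont v I \<and> v < midp I"
    using lft_lt_mid[of I] mid_lt_rgt[of I] by (auto simp: cont_def lchild_lr)
  have cr': "cont v (rchild I) \<longleftrightarrow> cont v I \<and> midp I \<le> v"
    using lft_lt_mid[of I] mid_lt_rgt[of I] by (auto simp: cont_def rchild_lr)
  have hl: "dl \<le> d + 1"
    using dist_child_le[of "lchild I" I D v] assms cl
    by (simp add: d_def dl_def fst_child parent_child vn_child Suc_leI)
  have hr: "dr \<le> d + 1"
    using dist_child_le[of "rchild I" I D v] assms cr'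
    by (simp add: d_def dr_def fst_child parent_child vn_child Suc_leI)
  have el: "cont v I \<Longrightarrow> v < midp I \<Longrightarrow> dl + 1 = d"
    using dist_child_eq[of "lchild I" I D v] assms cl
    by (simp add: d_def dl_def fst_child vn_child Suc_leI)
  have er: "cont v I \<Longrightarrow> midp I \<le> v \<Longrightarrow> dr + 1 = d"
    using dist_child_eq[of "rchild I" I D v] assms cr'
    by (simp add: d_def dr_def fst_child vn_child Suc_leI)
  have nx: "nxt D fl obs (Mid I) t = (if obs t then enter D (rchild I) else enter D (lchild I))"
    by (simp add: nxt_def)
  have ps: "psi D v (Mid I) = d + (if cont v I then 0 else 1)"
     "theta D v (Mid I) = 3 * d + (if cont v I then -2 else 4)"
    by (auto simp: psi_def theta_def d_def)
  show "psi D v (nxt D fl obs (Mid I) t) \<le> psi D v (Mid I) + (if cr then 1 else 0)"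
    and "theta D v (nxt D fl obs (Mid I) t) + 1 \<le> theta D v (Mid I) + (if cr then 6 else 0)"
    unfolding nx ps using hl hr el er by (auto simp: cr_def psi_enter theta_enter dl_def dr_def)
qed

lemma step_Com:
  fixes obs fl :: "nat \<Rightarrow> bool" and t :: nat and p :: "nat \<Rightarrow> real"
  assumes "vn l" "fst l = D" "0 \<le> v" "v < 1"
  defines "s \<equiv> Com l"
  defines "cr \<equiv> (obs t \<noteq> (posted p fl s t \<le> v))"
  defines "tf \<equiv> fails fl s t \<and> s = Com (true_leaf D v)"
  defines "ff \<equiv> fails fl s t \<and> s \<noteq> Com (true_leaf D v)"
  shows "psi D v (nxt D fl obs s t) + (if ff then 1 else 0) \<le> psi D v s + (if tf then 1 else 0) + (if cr then 1 else 0)"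
    and "theta D v (nxt D fl obs s t) + (if fails fl s t then 1 else 0) \<le> theta D v s + (if tf then 3 else 0) + (if cr then 6 else 0)"
proof -
  have "psi D v (nxt D fl obs s t) + (if ff then 1 else 0) \<le> psi D v s + (if tf then 1 else 0) + (if cr then 1 else 0)
    \<and> theta D v (nxt D fl obs s t) + (if fails fl s t then 1 else 0) \<le> theta D v s + (if tf then 3 else 0) + (if cr then 6 else 0)"
  proof (cases "fails fl s t")
    case False
    then show ?thesis by (simp add: nxt_def s_def ff_def tf_def)
  next
    case True
    then have pos: "0 < fst l" by (simp add: fails_def s_def)
    define P where "P = parent l"
    define dP where "dP = int (tdist D v P)"
    define d where "d = int (tdist D v l)"
    have nx: "nxt D fl obs s t = ChkR P (lft P = 0 \<or> obs t)"
      using True by (simp add: nxt_def s_def P_def)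
    have cr2: "cr = (obs t \<noteq> (lft P \<le> v))"
      using True by (simp add: cr_def posted_def s_def P_def)
    have ps: "psi D v (ChkR P (lft P = 0 \<or> obs t)) \<le> dP + (if cr then 1 else 0)"
      "theta D v (ChkR P (lft P = 0 \<or> obs t)) \<le> 3 * dP + (if cr then 5 else -1)"
      using lft_nonneg[of P] assms(3) unfolding cr2 by (auto simp: psi_def theta_def dP_def)
    have pss: "psi D v s = d" "theta D v s = 3 * d" by (simp_all add: s_def psi_def theta_def d_def)
    show ?thesis
    proof (cases "l = true_leaf D v")
      case tl: True
      then have c: "cont v l" using leaf_cont assms by blast
      then have "cont v P" using cont_parent pos by (simp add: P_def)
      then have "dP = 1" using dist_cont[of P v D] vn_parent[OF assms(1)] assms(2) pos
        by (simp add: dP_def P_def fst_parent)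
      moreover have "d = 0" using dist_cont[OF assms(1) c, of D] assms(2) by (simp add: d_def)
      ultimately show ?thesis unfolding nx pss using ps True tl
        by (auto simp: tf_def ff_def s_def)
    next
      case tl: False
      then have c: "\<not> cont v l" using leaf_cont assms by blast
      then have "dP + 1 = d" using dist_ncont[OF c assms(3,4,1), of D] by (simp add: dP_def d_def P_def)
      then show ?thesis unfolding nx pss using ps True tl
        by (auto simp: tf_def ff_def s_def)
    qed
  qed
  then show "psi D v (nxt D fl obs s t) + (if ff then 1 else 0) \<le> psi D v s + (if tf then 1 else 0) + (if cr then 1 else 0)"
    and "theta D v (nxt D fl obs s t) + (if fails fl s t then 1 else 0) \<le> theta D v s + (if tf then 3 else 0) + (if cr then 6 else 0)"
    by auto
qed

lemma step_all:
  fixes obs fl :: "nat \<Rightarrow> bool" and t :: nat and p :: "nat \<Rightarrow> real"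
  assumes "valid D s" "0 \<le> v" "v < 1"
  defines "cr \<equiv> (obs t \<noteq> (posted p fl s t \<le> v))"
  defines "tf \<equiv> fails fl s t \<and> s = Com (true_leaf D v)"
  defines "ff \<equiv> fails fl s t \<and> s \<noteq> Com (true_leaf D v)"
  defines "cm \<equiv> (\<exists>l. s = Com l) \<and> \<not> fails fl s t"
  shows "psi D v (nxt D fl obs s t) + (if ff then 1 else 0) \<le> psi D v s + (if tf then 1 else 0) + (if cr then 1 else 0)"
    and "theta D v (nxt D fl obs s t) + (if cm then 0 else 1) \<le> theta D v s + (if tf then 3 else 0) + (if cr then 6 else 0)"
proof -
  have "psi D v (nxt D fl obs s t) + (if ff then 1 else 0) \<le> psi D v s + (if tf then 1 else 0) + (if cr then 1 else 0)
    \<and> theta D v (nxt D fl obs s t) + (if cm then 0 else 1) \<le> theta D v s + (if tf then 3 else 0) + (if cr then 6 else 0)"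
  proof (cases s)
    case (ChkL I)
    then have "vn I" "fst I < D" using assms(1) by (auto simp: valid_def)
    from step_ChkL[OF this assms(2,3), where obs=obs and t=t and fl=fl] show ?thesis
      by (simp add: ChkL cr_def tf_def ff_def cm_def fails_def posted_def)
  next
    case (ChkR I b)
    then have "vn I" "fst I < D" using assms(1) by (auto simp: valid_def)
    from step_ChkR[OF this assms(2,3), where obs=obs and t=t and fl=fl and b=b] show ?thesis
      by (simp add: ChkR cr_def tf_def ff_def cm_def fails_def posted_def)
  next
    case (Mid I)
    then have "vn I" "fst I < D" using assms(1) by (auto simp: valid_def)
    from step_Mid[OF this assms(2,3), where obs=obs and t=t and fl=fl] show ?thesis
      by (simp add: Mid cr_def tf_def ff_def cm_def fails_def posted_def)
  next
    case (Com l)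
    then have vl: "vn l" "fst l = D" using assms(1) by (auto simp: valid_def)
    have e: "cm = (\<not> fails fl s t)" by (simp add: cm_def Com)
    from step_Com[OF vl assms(2,3), where obs=obs and t=t and fl=fl and p=p] show ?thesis
      unfolding e cr_def tf_def ff_def Com by (cases "fails fl (Com l) t") simp_all
  qed
  then show "psi D v (nxt D fl obs s t) + (if ff then 1 else 0) \<le> psi D v s + (if tf then 1 else 0) + (if cr then 1 else 0)"
    and "theta D v (nxt D fl obs s t) + (if cm then 0 else 1) \<le> theta D v s + (if tf then 3 else 0) + (if cr then 6 else 0)"
    by auto
qed

lemma valid_state: "valid D (state D fl obs t)"
  by (induction t) (auto simp: valid_init valid_nxt)

lemma lin3: "(a::int) + A \<le> z + 3*B + 6*C \<Longrightarrow> a' + x \<le> a + 3*y + 6*w \<Longrightarrow> a' + (A + x) \<le> z + 3*(B + y) + 6*(C + w)"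
  by (simp add: distrib_left)

lemma tele:
  fixes obs fl :: "nat \<Rightarrow> bool" and p :: "nat \<Rightarrow> real" and D T :: nat and v :: real
  assumes "0 \<le> v" "v < 1"
  defines "st \<equiv> state D fl obs"
  defines "cr \<equiv> \<lambda>t. (obs t \<noteq> (price D p fl obs t \<le> v))"
  defines "tf \<equiv> \<lambda>t. fails fl (st t) t \<and> st t = Com (true_leaf D v)"
  defines "ff \<equiv> \<lambda>t. fails fl (st t) t \<and> st t \<noteq> Com (true_leaf D v)"
  defines "cm \<equiv> \<lambda>t. (\<exists>l. st t = Com l) \<and> \<not> fails fl (st t) t"
  shows "psi D v (st T) + (\<Sum>t<T. if ff t then 1 else 0) \<le> psi D v (st 0) + (\<Sum>t<T. if tf t then 1 else 0) + (\<Sum>t<T. if cr t then 1 else 0)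
    \<and> theta D v (st T) + (\<Sum>t<T. if cm t then 0 else 1) \<le> theta D v (st 0) + 3 * (\<Sum>t<T. if tf t then 1 else 0) + 6 * (\<Sum>t<T. if cr t then 1 else 0)"
proof (induction T)
  case 0
  then show ?case by simp
next
  case (Suc T)
  note S = step_all[OF valid_state[of D fl obs T] assms(1,2), where p=p and t=T and obs=obs and fl=fl]
  have e: "st (Suc T) = nxt D fl obs (st T) T" by (simp add: st_def)
  have c: "posted p fl (st T) T = price D p fl obs T" by (simp add: price_def st_def)
  have S1: "psi D v (st (Suc T)) + (if ff T then 1 else 0) \<le> psi D v (st T) + (if tf T then 1 else 0) + (if cr T then 1 else 0)"
    using S(1) unfolding e c ff_def tf_def cr_def st_def[symmetric] .
  have S2: "theta D v (st (Suc T)) + (if cm T then 0 else 1) \<le> theta D v (st T) + (if tf T then 3 else 0) + (if cr T then 6 else 0)"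
    using S(2) unfolding e c cm_def tf_def cr_def st_def[symmetric] .
  have x1: "(if tf T then 3 else 0) = 3 * (if tf T then 1 else (0::int))" by simp
  have x2: "(if cr T then 6 else 0) = 6 * (if cr T then 1 else (0::int))" by simp
  from Suc.IH have I1: "psi D v (st T) + (\<Sum>t<T. if ff t then 1 else 0) \<le> psi D v (st 0) + (\<Sum>t<T. if tf t then 1 else 0) + (\<Sum>t<T. if cr t then 1 else 0)"
    and I2: "theta D v (st T) + (\<Sum>t<T. if cm t then 0 else 1) \<le> theta D v (st 0) + 3 * (\<Sum>t<T. if tf t then 1 else 0) + 6 * (\<Sum>t<T. if cr t then 1 else 0)"
    by auto
  show ?case unfolding sum.lessThan_Suc
  proof (intro conjI)
    show "psi D v (st (Suc T)) + ((\<Sum>t<T. if ff t then 1 else 0) + (if ff T then 1 else 0))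
      \<le> psi D v (st 0) + ((\<Sum>t<T. if tf t then 1 else 0) + (if tf T then 1 else 0)) + ((\<Sum>t<T. if cr t then 1 else 0) + (if cr T then 1 else 0))"
      using I1 S1 by linarith
    show "theta D v (st (Suc T)) + ((\<Sum>t<T. if cm t then 0 else 1) + (if cm T then 0 else 1))
      \<le> theta D v (st 0) + 3 * ((\<Sum>t<T. if tf t then 1 else 0) + (if tf T then 1 else 0)) + 6 * ((\<Sum>t<T. if cr t then 1 else 0) + (if cr T then 1 else 0))"
      using lin3[OF I2 S2[unfolded x1 x2]] .
  qed
qed

lemma card_sum_ind: "int (card {t. t < (T::nat) \<and> P t}) = (\<Sum>t<T. if P t then 1 else 0)"
proof -
  have "(\<Sum>t<T. if P t then 1 else 0) = (\<Sum>t\<in>{t\<in>{..<T}. P t}. (1::nat))"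
    by (rule sum.inter_filter[symmetric]) simp
  also have "\<dots> = card {t\<in>{..<T}. P t}" by simp
  also have "{t\<in>{..<T}. P t} = {t. t < T \<and> P t}" by auto
  finally have "card {t. t < T \<and> P t} = (\<Sum>t<T. if P t then 1 else 0)" by simp
  then have "int (card {t. t < T \<and> P t}) = (\<Sum>t<T. int (if P t then 1 else 0))" by (simp add: of_nat_sum)
  also have "\<dots> = (\<Sum>t<T. if P t then 1 else 0)" by (rule sum.cong) auto
  finally show ?thesis .
qed

lemma finite_leaves: "finite (leaves D)"
proof -
  have "leaves D = (\<lambda>k. (D, k)) ` {..<2^D}" by (auto simp: leaves_def)
  then show ?thesis by simp
qed

lemma price_nonneg: "\<forall>t. 0 \<le> p t \<Longrightarrow> 0 \<le> price D p fl obs t"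
  unfolding price_def posted_def
  by (auto split: st.split simp: lft_nonneg rgt_nonneg midp_nonneg)

lemma leaf_sum:
  fixes g :: "nat \<Rightarrow> real"
  assumes "\<And>t. g t = v - revenue v (price D p fl obs t)"
  shows "(\<Sum>l\<in>leaves D. leaf_regret D p fl obs v T l)
    = (\<Sum>t<T. if (\<exists>l. state D fl obs t = Com l) \<and> \<not> fails fl (state D fl obs t) t then g t else 0)"
proof -
  have "(\<Sum>l\<in>leaves D. leaf_regret D p fl obs v T l)
     = (\<Sum>l\<in>leaves D. \<Sum>t<T. if state D fl obs t = Com l \<and> \<not> fails fl (state D fl obs t) t then g t else 0)"
  proof (rule sum.cong[OF refl])
    fix l
    have CRl: "commit_rounds D fl obs T l = {t \<in> {..<T}. state D fl obs t = Com l \<and> \<not> fails fl (state D fl obs t) t}"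
      by (auto simp: commit_rounds_def)
    have "leaf_regret D p fl obs v T l = (\<Sum>t\<in>{t \<in> {..<T}. state D fl obs t = Com l \<and> \<not> fails fl (state D fl obs t) t}. g t)"
      unfolding leaf_regret_def CRl by (simp only: assms)
    also have "\<dots> = (\<Sum>t<T. if state D fl obs t = Com l \<and> \<not> fails fl (state D fl obs t) t then g t else 0)"
      by (rule sum.inter_filter) simp
    finally show "leaf_regret D p fl obs v T l = (\<Sum>t<T. if state D fl obs t = Com l \<and> \<not> fails fl (state D fl obs t) t then g t else 0)" .
  qed
  also have "\<dots> = (\<Sum>t<T. \<Sum>l\<in>leaves D. if state D fl obs t = Com l \<and> \<not> fails fl (state D fl obs t) t then g t else 0)"
    by (rule sum.swap)
  also have "\<dots> = (\<Sum>t<T. if (\<exists>l. state D fl obs t = Com l) \<and> \<not> fails fl (state D fl obs t) t then g t else 0)"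
  proof (rule sum.cong[OF refl])
    fix t
    show "(\<Sum>l\<in>leaves D. if state D fl obs t = Com l \<and> \<not> fails fl (state D fl obs t) t then g t else 0)
      = (if (\<exists>l. state D fl obs t = Com l) \<and> \<not> fails fl (state D fl obs t) t then g t else 0)"
    proof (cases "state D fl obs t")
      case (Com l0)
      have "valid D (state D fl obs t)" by (rule valid_state)
      then have "l0 \<in> leaves D" using Com by (cases l0) (auto simp: valid_def vn_def leaves_def)
      have "(\<Sum>l\<in>leaves D. if state D fl obs t = Com l \<and> \<not> fails fl (state D fl obs t) t then g t else 0)
        = (\<Sum>l\<in>leaves D. if l0 = l then (if \<not> fails fl (state D fl obs t) t then g t else 0) else 0)"
        by (rule sum.cong) (auto simp: Com)
      also have "\<dots> = (if \<not> fails fl (state D fl obs t) t then g t else 0)"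
        using finite_leaves \<open>l0 \<in> leaves D\<close> by (simp add: sum.delta)
      finally show ?thesis using Com by simp
    qed auto
  qed
  finally show ?thesis .
qed

lemma psi_init: "psi D v (state D fl obs 0) = int D"
  and theta_init: "theta D v (state D fl obs 0) = 3 * int D"
  by (simp_all add: psi_enter theta_enter tdist_def)

theorem theorem3p4:
  fixes T C D :: nat and v :: real and p :: "nat \<Rightarrow> real" and fl obs :: "nat \<Rightarrow> bool"
  assumes "D = nat \<lceil>log 2 (real T)\<rceil>"
    and "0 \<le> v" and "v < 1"
    and "\<forall>t. 0 \<le> p t \<and> p t \<le> 1"
    and "corruptions D p fl obs v T \<le> C"
  shows "real (n_fail_false D fl obs v T) \<le> real D + real C + real (n_fail_true D fl obs v T)
       \<and> regret D p fl obs v T \<le> (\<Sum>l\<in>leaves D. leaf_regret D p fl obs v T l)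
           + 3 * real D + 6 * real C + 3 * real (n_fail_true D fl obs v T)"
proof -
  define st where "st = state D fl obs"
  define cr where "cr = (\<lambda>t. (obs t \<noteq> (price D p fl obs t \<le> v)))"
  define tf where "tf = (\<lambda>t. fails fl (st t) t \<and> st t = Com (true_leaf D v))"
  define ff where "ff = (\<lambda>t. fails fl (st t) t \<and> st t \<noteq> Com (true_leaf D v))"
  define cm where "cm = (\<lambda>t. (\<exists>l. st t = Com l) \<and> \<not> fails fl (st t) t)"
  have TL: "psi D v (st T) + (\<Sum>t<T. if ff t then 1 else 0) \<le> psi D v (st 0) + (\<Sum>t<T. if tf t then 1 else 0) + (\<Sum>t<T. if cr t then 1 else 0)
    \<and> theta D v (st T) + (\<Sum>t<T. if cm t then 0 else 1) \<le> theta D v (st 0) + 3 * (\<Sum>t<T. if tf t then 1 else 0) + 6 * (\<Sum>t<T. if cr t then 1 else 0)"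
    using tele[OF assms(2,3), where fl=fl and obs=obs and p=p and T=T and D=D]
    unfolding st_def cr_def tf_def ff_def cm_def by blast
  have NT: "int (n_fail_true D fl obs v T) = (\<Sum>t<T. if tf t then 1 else 0)"
    unfolding n_fail_true_def card_sum_ind tf_def st_def ..
  have NF: "int (n_fail_false D fl obs v T) = (\<Sum>t<T. if ff t then 1 else 0)"
    unfolding n_fail_false_def card_sum_ind ff_def st_def ..
  have CR: "int (corruptions D p fl obs v T) = (\<Sum>t<T. if cr t then 1 else 0)"
    unfolding corruptions_def card_sum_ind cr_def ..
  have NC: "(\<Sum>t<T. if cm t then 0 else 1) \<le> 3 * int D + 6 * int C + 3 * int (n_fail_true D fl obs v T)"
    using TL theta_nonneg[OF valid_state assms(2,3), of D fl obs T] theta_init[of D v fl obs] NT CR assms(5)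
    unfolding st_def by linarith
  have part1: "int (n_fail_false D fl obs v T) \<le> int D + int C + int (n_fail_true D fl obs v T)"
    using TL psi_nonneg[of D v "st T"] psi_init[of D v fl obs] NT NF CR assms(5)
    unfolding st_def by linarith
  define g where "g = (\<lambda>t. v - revenue v (price D p fl obs t))"
  have g1: "g t \<le> 1" for t
    using price_nonneg[of p D fl obs t] assms(3,4) by (auto simp: g_def revenue_def)
  have LS: "(\<Sum>l\<in>leaves D. leaf_regret D p fl obs v T l) = (\<Sum>t<T. if cm t then g t else 0)"
    unfolding cm_def st_def by (rule leaf_sum) (simp add: g_def)
  have R: "regret D p fl obs v T = (\<Sum>t<T. g t)"
    by (simp add: regret_def g_def sum_subtractf)
  have "(\<Sum>t<T. g t) = (\<Sum>t<T. if cm t then g t else 0) + (\<Sum>t<T. if cm t then 0 else g t)"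
    by (simp add: sum.distrib[symmetric] if_distrib cong: if_cong)
  also have "(\<Sum>t<T. if cm t then 0 else g t) \<le> (\<Sum>t<T. if cm t then 0 else 1)"
    by (rule sum_mono) (simp add: g1)
  also have "(\<Sum>t<T. if cm t then 0 else (1::real)) = real_of_int (\<Sum>t<T. if cm t then 0 else 1)"
    by (simp add: of_int_sum if_distrib cong: if_cong)
  also have "\<dots> \<le> real_of_int (3 * int D + 6 * int C + 3 * int (n_fail_true D fl obs v T))"
    using NC by linarith
  finally have "regret D p fl obs v T \<le> (\<Sum>l\<in>leaves D. leaf_regret D p fl obs v T l)
           + 3 * real D + 6 * real C + 3 * real (n_fail_true D fl obs v T)"
    using R LS by simp
  moreover have "real (n_fail_false D fl obs v T) \<le> real D + real C + real (n_fail_true D fl obs v T)"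
    using part1 by linarith
  ultimately show ?thesis by blast
qed

end
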